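(* For every integer $n\ge 0$, the strong product $P_3\boxtimes (R_n\ast K_1)$ is $1$-perfectly orientable.
   Context: All graphs are finite and simple. An orientation of a graph $G$ is $1$-perfect if the out-neighborhood of every vertex induces a clique in $G$; $G$ is $1$-perfectly orientable if it admits a $1$-perfect orientation. The strong product $G\boxtimes H$ has vertex set $V(G)\times V(H)$, with distinct $(u,v),(u',v')$ adjacent iff $u'\in N_G[u]$ and $v'\in N_H[v]$ (closed neighborhoods). $P_3$ is the path on $3$ vertices. For an integer $n\ge 0$, the raft $R_n$ is the graph with vertex set $X\cup Y$, where $X=\{x_0,\dots,x_n\}$ and $Y=\{y_0,\dots,y_n\}$ are disjoint cliques, and, for $0\le i,j\le n$, $x_i$ is adjacent to $y_j$ iff $i+j\ge n+1$ (no other edges). $R_n\ast K_1$ is $R_n$ with an added vertex adjacent to all vertices of $R_n$. *)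

theory Defs
  imports Main
begin

text \<open>A (finite, simple) graph is given by a vertex set V and an adjacency relation E,
  which is assumed symmetric and irreflexive on V (all graphs below are constructed so).\<close>

definition is_orientation :: "'a set \<Rightarrow> ('a \<Rightarrow> 'a \<Rightarrow> bool) \<Rightarrow> ('a \<Rightarrow> 'a \<Rightarrow> bool) \<Rightarrow> bool" where
  "is_orientation V E D \<longleftrightarrow>
     (\<forall>u v. D u v \<longrightarrow> u \<in> V \<and> v \<in> V \<and> E u v) \<and>
     (\<forall>u\<in>V. \<forall>v\<in>V. E u v \<longrightarrow> (D u v \<or> D v u) \<and> \<not> (D u v \<and> D v u))"

definition one_perfect_orientation :: "'a set \<Rightarrow> ('a \<Rightarrow> 'a \<Rightarrow> bool) \<Rightarrow> ('a \<Rightarrow> 'a \<Rightarrow> bool) \<Rightarrow> bool" where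
  "one_perfect_orientation V E D \<longleftrightarrow> is_orientation V E D \<and>
     (\<forall>v\<in>V. \<forall>u\<in>V. \<forall>w\<in>V. D v u \<and> D v w \<and> u \<noteq> w \<longrightarrow> E u w)"

definition one_perfectly_orientable :: "'a set \<Rightarrow> ('a \<Rightarrow> 'a \<Rightarrow> bool) \<Rightarrow> bool" where
  "one_perfectly_orientable V E \<longleftrightarrow> (\<exists>D. one_perfect_orientation V E D)"

definition strong_prod_V :: "'a set \<Rightarrow> 'b set \<Rightarrow> ('a \<times> 'b) set" where
  "strong_prod_V V1 V2 = V1 \<times> V2"

definition strong_prod_E :: "'a set \<Rightarrow> ('a \<Rightarrow> 'a \<Rightarrow> bool) \<Rightarrow> 'b set \<Rightarrow> ('b \<Rightarrow> 'b \<Rightarrow> bool)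
    \<Rightarrow> ('a \<times> 'b) \<Rightarrow> ('a \<times> 'b) \<Rightarrow> bool" where
  "strong_prod_E V1 E1 V2 E2 p q \<longleftrightarrow>
     p \<in> V1 \<times> V2 \<and> q \<in> V1 \<times> V2 \<and> p \<noteq> q \<and>
     (fst q = fst p \<or> E1 (fst p) (fst q)) \<and> (snd q = snd p \<or> E2 (snd p) (snd q))"

definition P3_V :: "nat set" where "P3_V = {0, 1, 2}"
definition P3_E :: "nat \<Rightarrow> nat \<Rightarrow> bool" where
  "P3_E i j \<longleftrightarrow> i \<in> P3_V \<and> j \<in> P3_V \<and> (j = i + 1 \<or> i = j + 1)"

text \<open>Vertices of R_n * K_1: x_i, y_i and the apex (the added K_1 vertex).\<close>
datatype rvert = RX nat | RY nat | Apex

definition raft_apex_V :: "nat \<Rightarrow> rvert set" where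
  "raft_apex_V n = {RX i | i. i \<le> n} \<union> {RY i | i. i \<le> n} \<union> {Apex}"

fun raft_adj :: "nat \<Rightarrow> rvert \<Rightarrow> rvert \<Rightarrow> bool" where
  "raft_adj n (RX i) (RX j) = (i \<noteq> j)"
| "raft_adj n (RY i) (RY j) = (i \<noteq> j)"
| "raft_adj n (RX i) (RY j) = (i + j \<ge> n + 1)"
| "raft_adj n (RY j) (RX i) = (i + j \<ge> n + 1)"
| "raft_adj n Apex Apex = False"
| "raft_adj n Apex _ = True"
| "raft_adj n _ Apex = True"

definition raft_apex_E :: "nat \<Rightarrow> rvert \<Rightarrow> rvert \<Rightarrow> bool" where
  "raft_apex_E n u v \<longleftrightarrow> u \<in> raft_apex_V n \<and> v \<in> raft_apex_V n \<and> raft_adj n u v"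

end

theory Submission
  imports Defs
begin

fun g0 :: "rvert \<Rightarrow> rvert \<Rightarrow> bool" where
  "g0 v Apex = True"
| "g0 v (RX i) = True"
| "g0 (RY j) (RY i) = (j < i)"
| "g0 _ (RY i) = False"

fun g2 :: "rvert \<Rightarrow> rvert \<Rightarrow> bool" where
  "g2 v Apex = True"
| "g2 v (RY i) = True"
| "g2 (RX j) (RX i) = (j < i)"
| "g2 _ (RX i) = False"

fun lay :: "nat \<Rightarrow> rvert \<Rightarrow> rvert \<Rightarrow> bool" where
  "lay a Apex w = False"
| "lay a (RX i) Apex = True"
| "lay a (RY i) Apex = True"
| "lay a (RX i) (RX j) = (i < j)"
| "lay a (RY i) (RY j) = (i < j)"
| "lay a (RX i) (RY j) = (a \<noteq> 0)"
| "lay a (RY i) (RX j) = (a = 0)"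

fun f :: "nat \<times> rvert \<Rightarrow> nat \<times> rvert \<Rightarrow> bool" where
  "f (a, v) (b, w) =
    (if a = b then lay a v w
     else if a = 0 \<and> b = 1 then g0 v w
     else if a = 1 \<and> b = 0 then \<not> g0 w v
     else if a = 2 \<and> b = 1 then g2 v w
     else if a = 1 \<and> b = 2 then \<not> g2 w v
     else False)"

lemma raft_adj_sym: "raft_adj n u v \<Longrightarrow> raft_adj n v u"
  by (cases u; cases v) auto

lemma vert_cases:
  assumes "v \<in> raft_apex_V n"
  obtains i where "v = RX i" "i \<le> n" | i where "v = RY i" "i \<le> n" | "v = Apex"
  using assms unfolding raft_apex_V_def by blast

lemma layer_cases:
  assumes "a \<in> P3_V"
  obtains "a = 0" | "a = 1" | "a = 2"
  using assms unfolding P3_V_def by blast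

lemma antisym:
  assumes "a \<in> P3_V" "b \<in> P3_V" "v \<in> raft_apex_V n" "w \<in> raft_apex_V n"
    "strong_prod_E P3_V P3_E (raft_apex_V n) (raft_apex_E n) (a,v) (b,w)"
  shows "f (a,v) (b,w) \<noteq> f (b,w) (a,v)"
  using assms
  apply (elim layer_cases vert_cases)
  apply (auto simp: strong_prod_E_def P3_E_def P3_V_def raft_apex_E_def)
  done

lemma clique:
  assumes "a \<in> P3_V" "b \<in> P3_V" "c \<in> P3_V" "v \<in> raft_apex_V n" "w \<in> raft_apex_V n" "x \<in> raft_apex_V n"
    "strong_prod_E P3_V P3_E (raft_apex_V n) (raft_apex_E n) (a,v) (b,w)"
    "strong_prod_E P3_V P3_E (raft_apex_V n) (raft_apex_E n) (a,v) (c,x)"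
    "f (a,v) (b,w)" "f (a,v) (c,x)" "(b,w) \<noteq> (c,x)"
  shows "strong_prod_E P3_V P3_E (raft_apex_V n) (raft_apex_E n) (b,w) (c,x)"
  using assms
  apply (elim layer_cases vert_cases)
  apply (auto simp: strong_prod_E_def P3_E_def P3_V_def raft_apex_E_def)
  done

theorem corollary20:
  fixes n :: nat
  shows "one_perfectly_orientable (strong_prod_V P3_V (raft_apex_V n))
           (strong_prod_E P3_V P3_E (raft_apex_V n) (raft_apex_E n))"
proof -
  let ?E = "strong_prod_E P3_V P3_E (raft_apex_V n) (raft_apex_E n)"
  let ?V = "strong_prod_V P3_V (raft_apex_V n)"
  define D where "D p q \<longleftrightarrow> ?E p q \<and> f p q" for p q
  have EV: "?E p q \<Longrightarrow> p \<in> ?V \<and> q \<in> ?V" for p q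
    by (simp add: strong_prod_E_def strong_prod_V_def)
  have o1: "\<forall>u v. D u v \<longrightarrow> u \<in> ?V \<and> v \<in> ?V \<and> ?E u v"
    using EV D_def by blast
  have o2: "(D u v \<or> D v u) \<and> \<not> (D u v \<and> D v u)"
    if uv: "u \<in> ?V" "v \<in> ?V" "?E u v" for u v
  proof -
    obtain a x where u: "u = (a,x)" by fastforce
    obtain b y where v: "v = (b,y)" by fastforce
    have "f u v \<noteq> f v u" using antisym[of a b x n y] uv u v
      by (simp add: strong_prod_V_def)
    moreover have "?E v u" using uv
      by (auto simp: strong_prod_E_def P3_E_def raft_apex_E_def intro: raft_adj_sym)
    ultimately show ?thesis using uv D_def by auto
  qed
  have ori: "is_orientation ?V ?E D"
    unfolding is_orientation_def using o1 o2 by blast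
  have "one_perfect_orientation ?V ?E D"
    unfolding one_perfect_orientation_def
  proof (intro conjI ori ballI impI, elim conjE)
    fix p q r assume "p \<in> ?V" "q \<in> ?V" "r \<in> ?V" and h: "D p q" "D p r" "q \<noteq> r"
    obtain a x where p: "p = (a,x)" by fastforce
    obtain b y where q: "q = (b,y)" by fastforce
    obtain c z where r: "r = (c,z)" by fastforce
    show "?E q r" using clique[of a b c x n y z] h \<open>p \<in> ?V\<close> \<open>q \<in> ?V\<close> \<open>r \<in> ?V\<close> p q r
      by (auto simp: D_def strong_prod_V_def)
  qed
  then show ?thesis unfolding one_perfectly_orientable_def by blast
qed

end
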